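(* Let $t_1, t_2 \in \mathsf{Topo}$, let $f$ be an embedding of $t_1$ in $t_2$, and let $q \in \mathsf{PIFOTree}(t_1)$. Then $q \preceq \widehat f(q)$.
   Context: Fix a set $\mathsf{Pkt}$ of packets and a totally ordered set $\mathsf{Rk}$ of ranks (a smaller rank is more favorable). PIFOs: for a set $S$, a PIFO over $S$ is a finite sequence of pairs $(s,r) \in S \times \mathsf{Rk}$ kept in insertion order; $\mathsf{PIFO}(S)$ is the set of these. $\mathsf{push}_{\mathsf{PIFO}}(p,s,r)$ appends $(s,r)$ to $p$. $\mathsf{pop}_{\mathsf{PIFO}}(p)$ is undefined if $p$ is empty; otherwise it removes the entry $(s,r)$ of $p$ with minimal rank (earliest-inserted among ties) and returns $(s,p')$ with $p'$ the rest. Topologies: $\mathsf{Topo}$ is the smallest set with $* \in \mathsf{Topo}$ and $\mathsf{Node}(\vec t) \in \mathsf{Topo}$ for every $n \in \mathbb{N}$, $\vec t \in \mathsf{Topo}^n$; $\vec t[i]$ is the $i$-th entry. PIFO trees: $\mathsf{Leaf}(p) \in \mathsf{PIFOTree}( * )$ for $p \in \mathsf{PIFO}(\mathsf{Pkt})$; $\mathsf{Internal}(\vec q, p) \in \mathsf{PIFOTree}(\mathsf{Node}(\vec t))$ whenever $\vec t \in \mathsf{Topo}^n$, $p \in \mathsf{PIFO}(\{1,\dots,n\})$, $\vec q[i] \in \mathsf{PIFOTree}(\vec t[i])$. $\vec q[q'/i]$ is $\vec q$ with $i$-th entry replaced by $q'$. pop (partial): $\mathsf{pop}(\mathsf{Leaf}(p))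 = (pkt,\mathsf{Leaf}(p'))$ if $\mathsf{pop}_{\mathsf{PIFO}}(p)=(pkt,p')$; $\mathsf{pop}(\mathsf{Internal}(\vec q,p)) = (pkt,\mathsf{Internal}(\vec q[q'/i],p'))$ if $\mathsf{pop}_{\mathsf{PIFO}}(p)=(i,p')$ and $\mathsf{pop}(\vec q[i]) = (pkt,q')$; undefined otherwise. Paths: $\mathsf{Path}( * ) = \mathsf{Rk}$; $\mathsf{Path}(\mathsf{Node}(\vec t))$ consists of $(i,r)::pt$ with $1\le i\le n$, $r\in\mathsf{Rk}$, $pt\in\mathsf{Path}(\vec t[i])$. push: $\mathsf{push}(\mathsf{Leaf}(p),pkt,r) = \mathsf{Leaf}(\mathsf{push}_{\mathsf{PIFO}}(p,pkt,r))$; $\mathsf{push}(\mathsf{Internal}(\vec q,p),pkt,(i,r)::pt) = \mathsf{Internal}(\vec q[\mathsf{push}(\vec q[i],pkt,pt)/i],\mathsf{push}_{\mathsf{PIFO}}(p,i,r))$. Simulation: a relation $R \subseteq \mathsf{PIFOTree}(t_1)\times\mathsf{PIFOTree}(t_2)$ is a simulation if for all $pkt$ and $q_1 \mathrel{R} q_2$: (1) if $\mathsf{pop}(q_1)$ is undefined so is $\mathsf{pop}(q_2)$; (2) if $\mathsf{pop}(q_1)=(pkt,q_1')$ then $\mathsf{pop}(q_2)=(pkt,q_2')$ with $q_1' \mathrel{R} q_2'$; (3) for every $pt_1\in\mathsf{Path}(t_1)$ there is $pt_2 \in \mathsf{Path}(t_2)$ with $\mathsf{push}(q_1,pkt,pt_1)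 \mathrel{R} \mathsf{push}(q_2,pkt,pt_2)$. $q_1 \preceq q_2$ means some simulation relates them. Addresses: $\mathsf{Addr}(t) \subseteq \mathbb{N}^*$ is the smallest set with $\epsilon \in \mathsf{Addr}(t)$ and $i\cdot\alpha \in \mathsf{Addr}(\mathsf{Node}(\vec t))$ for $1\le i\le n$, $\alpha \in \mathsf{Addr}(\vec t[i])$. Subtrees: $t/\epsilon = t$, $\mathsf{Node}(\vec t)/(i\cdot\alpha) = \vec t[i]/\alpha$. An embedding of $t_1$ in $t_2$ is an injective $f:\mathsf{Addr}(t_1)\to\mathsf{Addr}(t_2)$ with $f(\epsilon)=\epsilon$, $t_2/f(\alpha) = *$ whenever $t_1/\alpha = *$, and: $\alpha$ is a prefix of $\alpha'$ iff $f(\alpha)$ is a prefix of $f(\alpha')$. If $t_1 = *$ then $t_2 = *$; if $t_1 = \mathsf{Node}(\vec t_1)$ then for each $i$ the map $f_i$ defined by $f(i\cdot\alpha) = f(i)\cdot f_i(\alpha)$ is an embedding of $t_1/i$ in $t_2/f(i)$. Lifting $\widehat f:\mathsf{PIFOTree}(t_1)\to\mathsf{PIFOTree}(t_2)$, by recursion on $t_1$: if $t_1 = *$, $\widehat f(q) = q$. If $t_1 = \mathsf{Node}(\vec t_1)$ with $n$ children and $q = \mathsf{Internal}(\vec q,p)$, define for each address $\alpha$ of $t_2$ that is a prefix of some $f(i)$ a tree $\widehat f(q)_\alpha \in \mathsf{PIFOTree}(t_2/\alpha)$, from longer to shorter $\alpha$: if $\alpha = f(i)$, then $\widehat f(q)_\alpha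 = \widehat{f_i}(\vec q[i])$; otherwise $t_2/\alpha$ is a node with some $m$ children, and $\widehat f(q)_\alpha = \mathsf{Internal}(\vec q_\alpha, p_\alpha)$ where $\vec q_\alpha[j] = \widehat f(q)_{\alpha\cdot j}$ if $\alpha\cdot j$ is a prefix of some $f(i)$, and otherwise $\vec q_\alpha[j]$ is the tree of topology $t_2/(\alpha\cdot j)$ all of whose PIFOs are empty; and $p_\alpha$ is obtained from $p$ by replacing each entry $(i,r)$ with $(j,r)$ where $j$ is such that $\alpha\cdot j$ is a prefix of $f(i)$, deleting entries $(i,r)$ for which no such $j$ exists, and keeping the order of entries. Finally $\widehat f(q) = \widehat f(q)_\epsilon$. *)

theory Defs
  imports Main "HOL-Library.Sublist"
begin

text \<open>A PIFO over S is a list of (element, rank) pairs in insertion order.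
  Ranks come from a linear order; smaller rank = more favorable.\<close>

type_synonym ('s, 'r) pifo = "('s \<times> 'r) list"

definition pifo_push :: "('s, 'r) pifo \<Rightarrow> 's \<Rightarrow> 'r \<Rightarrow> ('s, 'r) pifo" where
  "pifo_push p s r = p @ [(s, r)]"

definition pifo_pop :: "('s, 'r::linorder) pifo \<Rightarrow> ('s \<times> ('s, 'r) pifo) option" where
  "pifo_pop p = (if p = [] then None else
     (let k = (LEAST k. k < length p \<and> (\<forall>x\<in>set p. snd (p ! k) \<le> snd x))
      in Some (fst (p ! k), take k p @ drop (Suc k) p)))"

datatype topo = Star | Node "topo list"

section \<open>PIFO trees (children indexed from 0)\<close>

datatype ('p, 'r) ptree = Leaf "('p, 'r) pifo" | Internal "('p, 'r) ptree list" "(nat, 'r) pifo"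

lemma mem_size_less: "x \<in> set xs \<Longrightarrow> size x < Suc (size_list size xs)"
  by (simp add: less_Suc_eq_le size_list_estimation')

lemma zip_size_less: "(i, x) \<in> set (zip ns xs) \<Longrightarrow> size x < Suc (size_list size xs)"
  by (meson mem_size_less set_zip_rightD)

lemma zip2_size_less: "(i, x, y) \<in> set (zip ns (zip xs ys)) \<Longrightarrow> size x < Suc (size_list size xs)"
  by (meson mem_size_less set_zip_rightD set_zip_leftD)

lemma size_nth_le: "i < length qs \<Longrightarrow> g (qs ! i) \<le> size_list g qs"
  by (metis nth_mem size_list_estimation' order_refl)

function wf_tree :: "topo \<Rightarrow> ('p, 'r) ptree \<Rightarrow> bool" where
  "wf_tree Star (Leaf p) = True"
| "wf_tree (Node ts) (Internal qs p) =
     (length qs = length ts \<and> (\<forall>i<length ts. wf_tree (ts ! i) (qs ! i)) \<and>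
      (\<forall>(i, r)\<in>set p. i < length ts))"
| "wf_tree Star (Internal qs p) = False"
| "wf_tree (Node ts) (Leaf p) = False"
  by pat_completeness auto
termination
  by (relation "measure (\<lambda>(t, _). size t)") (auto dest!: size_nth_le[where g = size])

function pop :: "('p, 'r::linorder) ptree \<Rightarrow> ('p \<times> ('p, 'r) ptree) option" where
  "pop (Leaf p) = (case pifo_pop p of None \<Rightarrow> None | Some (x, p') \<Rightarrow> Some (x, Leaf p'))"
| "pop (Internal qs p) = (case pifo_pop p of None \<Rightarrow> None
     | Some (i, p') \<Rightarrow> if i < length qs then
         (case pop (qs ! i) of None \<Rightarrow> None
          | Some (x, q') \<Rightarrow> Some (x, Internal (qs[i := q']) p'))
       else None)"
  by pat_completeness auto
termination
  by (relation "measure size") (auto dest!: size_nth_le[where g = size])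

datatype 'r path = PEnd 'r | PStep nat 'r "'r path"

fun is_path :: "topo \<Rightarrow> 'r path \<Rightarrow> bool" where
  "is_path Star (PEnd r) = True"
| "is_path (Node ts) (PStep i r pt) = (i < length ts \<and> is_path (ts ! i) pt)"
| "is_path _ _ = False"

function push :: "('p, 'r) ptree \<Rightarrow> 'p \<Rightarrow> 'r path \<Rightarrow> ('p, 'r) ptree" where
  "push (Leaf p) x (PEnd r) = Leaf (pifo_push p x r)"
| "push (Internal qs p) x (PStep i r pt) =
     (if i < length qs then Internal (qs[i := push (qs ! i) x pt]) (pifo_push p i r)
      else Internal qs p)"
| "push (Leaf p) x (PStep i r pt) = Leaf p"
| "push (Internal qs p) x (PEnd r) = Internal qs p"
  by pat_completeness auto
termination
  by (relation "measure (\<lambda>(q, _, _). size q)") (auto dest!: size_nth_le[where g = size])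

definition simulation :: "topo \<Rightarrow> topo \<Rightarrow> (('p, 'r::linorder) ptree \<times> ('p, 'r) ptree) set \<Rightarrow> bool" where
  "simulation t1 t2 R \<longleftrightarrow>
     (\<forall>(q1, q2)\<in>R. wf_tree t1 q1 \<and> wf_tree t2 q2) \<and>
     (\<forall>(q1, q2)\<in>R.
        (pop q1 = None \<longrightarrow> pop q2 = None) \<and>
        (\<forall>x q1'. pop q1 = Some (x, q1') \<longrightarrow>
            (\<exists>q2'. pop q2 = Some (x, q2') \<and> (q1', q2') \<in> R)) \<and>
        (\<forall>x pt1. is_path t1 pt1 \<longrightarrow>
            (\<exists>pt2. is_path t2 pt2 \<and> (push q1 x pt1, push q2 x pt2) \<in> R)))"

definition simulated_by :: "topo \<Rightarrow> topo \<Rightarrow> ('p, 'r::linorder) ptree \<Rightarrow> ('p, 'r) ptree \<Rightarrow> bool" where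
  "simulated_by t1 t2 q1 q2 \<longleftrightarrow> (\<exists>R. simulation t1 t2 R \<and> (q1, q2) \<in> R)"

section \<open>Addresses, subtrees, embeddings (child indices from 0)\<close>

fun valid_addr :: "topo \<Rightarrow> nat list \<Rightarrow> bool" where
  "valid_addr t [] = True"
| "valid_addr Star (i # a) = False"
| "valid_addr (Node ts) (i # a) = (i < length ts \<and> valid_addr (ts ! i) a)"

definition addr :: "topo \<Rightarrow> nat list set" where
  "addr t = {a. valid_addr t a}"

fun subtree :: "topo \<Rightarrow> nat list \<Rightarrow> topo" where
  "subtree t [] = t"
| "subtree (Node ts) (i # a) = subtree (ts ! i) a"
| "subtree Star (i # a) = Star"

definition embedding :: "topo \<Rightarrow> topo \<Rightarrow> (nat list \<Rightarrow> nat list) \<Rightarrow> bool" where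
  "embedding t1 t2 f \<longleftrightarrow>
     f ` addr t1 \<subseteq> addr t2 \<and>
     inj_on f (addr t1) \<and>
     f [] = [] \<and>
     (\<forall>a\<in>addr t1. subtree t1 a = Star \<longrightarrow> subtree t2 (f a) = Star) \<and>
     (\<forall>a\<in>addr t1. \<forall>a'\<in>addr t1. prefix a a' \<longleftrightarrow> prefix (f a) (f a'))"

text \<open>The sub-embedding f_i, determined by f(i.a) = f(i).f_i(a).\<close>
definition sub_emb :: "(nat list \<Rightarrow> nat list) \<Rightarrow> nat \<Rightarrow> nat list \<Rightarrow> nat list" where
  "sub_emb f i = (\<lambda>a. drop (length (f [i])) (f (i # a)))"

fun empty_tree :: "topo \<Rightarrow> ('p, 'r) ptree" where
  "empty_tree Star = Leaf []"
| "empty_tree (Node ts) = Internal (map empty_tree ts) []"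

definition reindex :: "(nat list \<Rightarrow> nat list) \<Rightarrow> nat list \<Rightarrow> (nat, 'r) pifo \<Rightarrow> (nat, 'r) pifo" where
  "reindex f a p = [((THE j. prefix (a @ [j]) (f [i])), r). (i, r) \<leftarrow> p, \<exists>j. prefix (a @ [j]) (f [i])]"

text \<open>build Ls f n p u a computes the tree (hat f)(q)_a, where u = t2/a, q = Internal qs p has n
  children, and Ls ! i is the already lifted child (hat f_i)(qs ! i).\<close>
function build :: "('p, 'r) ptree list \<Rightarrow> (nat list \<Rightarrow> nat list) \<Rightarrow> nat \<Rightarrow> (nat, 'r) pifo
               \<Rightarrow> topo \<Rightarrow> nat list \<Rightarrow> ('p, 'r) ptree" where
  "build Ls f n p u a =
     (if \<exists>i<n. f [i] = a then Ls ! (THE i. i < n \<and> f [i] = a)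
      else (case u of
              Star \<Rightarrow> Leaf []
            | Node us \<Rightarrow> Internal
                 (map (\<lambda>(j, uj). if \<exists>i<n. prefix (a @ [j]) (f [i])
                                  then build Ls f n p uj (a @ [j])
                                  else empty_tree uj)
                      (zip [0..<length us] us))
                 (reindex f a p)))"
  by pat_completeness auto
termination
  by (relation "measure (\<lambda>(_, _, _, _, u, _). size u)") (auto intro: zip_size_less zip2_size_less)

declare build.simps [simp del]

function lift :: "topo \<Rightarrow> topo \<Rightarrow> (nat list \<Rightarrow> nat list) \<Rightarrow> ('p, 'r) ptree \<Rightarrow> ('p, 'r) ptree" where
  "lift Star t2 f q = q"
| "lift (Node ts) t2 f (Leaf p) = Leaf p"
| "lift (Node ts) t2 f (Internal qs p) =
     build (map (\<lambda>(i, ti, qi). lift ti (subtree t2 (f [i])) (sub_emb f i) qi)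
                (zip [0..<length ts] (zip ts qs)))
           f (length ts) p t2 []"
  by pat_completeness auto
termination
  by (relation "measure (\<lambda>(t1, _, _, _). size t1)") (auto intro: zip_size_less zip2_size_less)

end

theory Submission
  imports Defs
begin

lemma pifo_pop_split:
  assumes "\<forall>x\<in>set xs. snd e < snd x" "\<forall>y\<in>set ys. snd e \<le> snd y"
  shows "pifo_pop (xs @ e # ys) = Some (fst e, xs @ ys)"
proof -
  let ?p = "xs @ e # ys"
  have L: "(LEAST k. k < length ?p \<and> (\<forall>x\<in>set ?p. snd (?p ! k) \<le> snd x)) = length xs"
  proof (rule Least_equality)
    show "length xs < length ?p \<and> (\<forall>x\<in>set ?p. snd (?p ! length xs) \<le> snd x)"
      using assms by (auto intro: less_imp_le)
  next
    fix k assume k: "k < length ?p \<and> (\<forall>x\<in>set ?p. snd (?p ! k) \<le> snd x)"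
    show "length xs \<le> k"
    proof (rule ccontr)
      assume "\<not> length xs \<le> k"
      then have "?p ! k = xs ! k" "xs ! k \<in> set xs" by (auto simp: nth_append)
      moreover have "e \<in> set ?p" by simp
      ultimately show False using k assms(1) by fastforce
    qed
  qed
  show ?thesis unfolding pifo_pop_def Let_def L by simp
qed

lemma pifo_pop_Some:
  assumes "pifo_pop p = Some (s, p')"
  shows "\<exists>xs e ys. p = xs @ e # ys \<and> (\<forall>x\<in>set xs. snd e < snd x) \<and> (\<forall>y\<in>set ys. snd e \<le> snd y)
     \<and> s = fst e \<and> p' = xs @ ys"
proof -
  have ne: "p \<noteq> []" using assms by (auto simp: pifo_pop_def)
  define m where "m = Min (snd ` set p)"
  have "m \<in> snd ` set p" unfolding m_def using ne by (intro Min_in) auto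
  then obtain y where y: "y \<in> set p" "snd y = m" by auto
  then obtain k0 where k0: "k0 < length p" "p ! k0 = y" by (auto simp: in_set_conv_nth)
  have ex: "k0 < length p \<and> (\<forall>x\<in>set p. snd (p ! k0) \<le> snd x)"
    using k0 y unfolding m_def by auto
  define k where "k = (LEAST k. k < length p \<and> (\<forall>x\<in>set p. snd (p ! k) \<le> snd x))"
  have kP: "k < length p \<and> (\<forall>x\<in>set p. snd (p ! k) \<le> snd x)"
    unfolding k_def by (rule LeastI[of _ k0], rule ex)
  have eq: "s = fst (p ! k)" "p' = take k p @ drop (Suc k) p"
    using assms ne unfolding pifo_pop_def Let_def k_def by auto
  have split: "p = take k p @ p ! k # drop (Suc k) p"
    using kP by (simp add: id_take_nth_drop)
  have "\<forall>x\<in>set (take k p). snd (p ! k) < snd x"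
  proof
    fix x assume "x \<in> set (take k p)"
    then obtain k' where k': "k' < k" "x = p ! k'" using kP
      by (auto simp: in_set_conv_nth)
    show "snd (p ! k) < snd x"
    proof (rule ccontr)
      assume "\<not> snd (p ! k) < snd x"
      then have "k' < length p \<and> (\<forall>x\<in>set p. snd (p ! k') \<le> snd x)"
        using kP k' by (auto intro: order_trans)
      then have "k \<le> k'" unfolding k_def by (rule Least_le)
      then show False using k' by simp
    qed
  qed
  moreover have "\<forall>y\<in>set (drop (Suc k) p). snd (p ! k) \<le> snd y"
    using kP by (auto dest: in_set_dropD)
  ultimately show ?thesis using split eq by blast
qed

lemma reindex_alt:
  "reindex f a p = map (\<lambda>(i, r). (THE j. prefix (a @ [j]) (f [i]), r))
      (filter (\<lambda>(i, r). \<exists>j. prefix (a @ [j]) (f [i])) p)"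
  unfolding reindex_def by (induction p) auto

lemma subtree_Star[simp]: "subtree Star b = Star"
  by (cases b) auto

lemma subtree_append: "subtree t (a @ b) = subtree (subtree t a) b"
proof (induction a arbitrary: t)
  case Nil then show ?case by simp
next
  case (Cons i a) then show ?case by (cases t) auto
qed

lemma valid_append: "valid_addr t (a @ b) \<longleftrightarrow> valid_addr t a \<and> valid_addr (subtree t a) b"
proof (induction a arbitrary: t)
  case Nil then show ?case by simp
next
  case (Cons i a) then show ?case by (cases t) auto
qed

definition good :: "(nat list \<Rightarrow> nat list) \<Rightarrow> nat \<Rightarrow> topo \<Rightarrow> bool" where
  "good f n t2 \<longleftrightarrow> (\<forall>i<n. valid_addr t2 (f [i]) \<and> f [i] \<noteq> []) \<and>
     (\<forall>i<n. \<forall>i'<n. prefix (f [i]) (f [i']) \<longrightarrow> i = i')"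

lemma good_inj: "good f n t2 \<Longrightarrow> i < n \<Longrightarrow> i' < n \<Longrightarrow> f [i] = f [i'] \<Longrightarrow> i = i'"
  unfolding good_def by auto

lemma build_eq1: "good f n t2 \<Longrightarrow> i < n \<Longrightarrow> f [i] = a \<Longrightarrow> build Ls f n p u a = Ls ! i"
proof -
  assume g: "good f n t2" and i: "i < n" "f [i] = a"
  have "(THE i. i < n \<and> f [i] = a) = i"
    using i good_inj[OF g] by (intro the_equality) auto
  then show ?thesis using i by (subst build.simps) auto
qed

lemma build_eq2: "\<not> (\<exists>i<n. f [i] = a) \<Longrightarrow> build Ls f n p (Node us) a =
   Internal (map (\<lambda>(j, uj). if \<exists>i<n. prefix (a @ [j]) (f [i])
                                  then build Ls f n p uj (a @ [j])
                                  else empty_tree uj)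
                      (zip [0..<length us] us))
                 (reindex f a p)"
  by (subst build.simps) auto

lemma build_eq3: "\<not> (\<exists>i<n. f [i] = a) \<Longrightarrow> build Ls f n p Star a = Leaf []"
  by (subst build.simps) auto

lemma reindex_filter:
  assumes "\<forall>i j. prefix (a @ [j]) (f [i]) \<longrightarrow> Q i"
  shows "reindex f a (filter (\<lambda>(i, r). Q i) p) = reindex f a p"
  using assms unfolding reindex_alt by (induction p) auto

lemma build_cong:
  assumes "good f n t2"
  shows "(\<forall>i<n. prefix a (f [i]) \<longrightarrow> Ls ! i = Ls2 ! i) \<Longrightarrow>
    filter (\<lambda>(i, r). prefix a (f [i])) p = filter (\<lambda>(i, r). prefix a (f [i])) p2 \<Longrightarrow>
    build Ls f n p u a = build Ls2 f n p2 u a"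
proof (induction u arbitrary: a)
  case Star
  then show ?case
    by (cases "\<exists>i<n. f [i] = a") (auto simp: build_eq1[OF assms] build_eq3)
next
  case (Node us)
  show ?case
  proof (cases "\<exists>i<n. f [i] = a")
    case True
    then show ?thesis using Node.prems by (auto simp: build_eq1[OF assms])
  next
    case False
    have r: "reindex f a p = reindex f a p2"
    proof -
      have h: "\<forall>i j. prefix (a @ [j]) (f [i]) \<longrightarrow> prefix a (f [i])"
        by (auto dest: append_prefixD)
      have "reindex f a p = reindex f a (filter (\<lambda>(i, r). prefix a (f [i])) p)"
        using reindex_filter[OF h] by metis
      also have "\<dots> = reindex f a (filter (\<lambda>(i, r). prefix a (f [i])) p2)"
        using Node.prems by simp
      also have "\<dots> = reindex f a p2" using reindex_filter[OF h] by metis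
      finally show ?thesis .
    qed
    have c: "build Ls f n p uj (a @ [j]) = build Ls2 f n p2 uj (a @ [j])"
      if "(j, uj) \<in> set (zip [0..<length us] us)" for j uj
    proof -
      have uj: "uj \<in> set us" using that by (auto dest: set_zip_rightD)
      have pa: "prefix (a @ [j]) x \<Longrightarrow> prefix a x" for x
        by (auto dest: append_prefixD)
      have "filter (\<lambda>(i, r). prefix (a @ [j]) (f [i])) p =
            filter (\<lambda>(i, r). prefix (a @ [j]) (f [i])) (filter (\<lambda>(i, r). prefix a (f [i])) p)"
        by (auto simp: filter_filter intro!: filter_cong dest: pa)
      also have "\<dots> = filter (\<lambda>(i, r). prefix (a @ [j]) (f [i])) (filter (\<lambda>(i, r). prefix a (f [i])) p2)"
        using Node.prems by simp
      also have "\<dots> = filter (\<lambda>(i, r). prefix (a @ [j]) (f [i])) p2"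
        by (auto simp: filter_filter intro!: filter_cong dest: pa)
      finally show ?thesis
        using Node.IH[OF uj] Node.prems pa by blast
    qed
    show ?thesis using False r c by (auto simp: build_eq2 intro!: map_cong)
  qed
qed

lemma prefix_snoc_nth: "prefix (a @ [j]) x \<Longrightarrow> x ! length a = j"
  by (auto simp: prefix_def nth_append)

lemma prefix_snoc_unique:
  "prefix (a @ [j]) x \<Longrightarrow> prefix (a @ [j']) x \<Longrightarrow> j = j'"
  using prefix_snoc_nth by metis

lemma the_j: "prefix (a @ [j]) x \<Longrightarrow> (THE j. prefix (a @ [j]) x) = j"
  by (rule the_equality) (auto dest: prefix_snoc_unique)

lemma reindex_pop:
  assumes "pifo_pop p = Some (i0, p')" "prefix (a @ [j0]) (f [i0])"
  shows "pifo_pop (reindex f a p) = Some (j0, reindex f a p')"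
proof -
  obtain xs e ys where e: "p = xs @ e # ys" "\<forall>x\<in>set xs. snd e < snd x" "\<forall>y\<in>set ys. snd e \<le> snd y"
     "i0 = fst e" "p' = xs @ ys"
    using pifo_pop_Some[OF assms(1)] by blast
  obtain r0 where e0: "e = (i0, r0)" using e(4) by (cases e) auto
  let ?P = "\<lambda>(i, r). \<exists>j. prefix (a @ [j]) (f [i])"
  let ?g = "\<lambda>(i, r). (THE j. prefix (a @ [j]) (f [i]), r)"
  have Pe: "?P e" using assms(2) e0 by auto
  have ge: "?g e = (j0, r0)" using the_j[OF assms(2)] e0 by simp
  have sg: "snd (?g x) = snd x" for x by (cases x) auto
  have "reindex f a p = map ?g (filter ?P xs) @ ?g e # map ?g (filter ?P ys)"
    unfolding reindex_alt e(1) using Pe by simp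
  moreover have "reindex f a p' = map ?g (filter ?P xs) @ map ?g (filter ?P ys)"
    unfolding reindex_alt e(5) by simp
  moreover have "pifo_pop (map ?g (filter ?P xs) @ ?g e # map ?g (filter ?P ys)) =
      Some (fst (?g e), map ?g (filter ?P xs) @ map ?g (filter ?P ys))"
    by (rule pifo_pop_split) (use e(2,3) in \<open>auto simp: e0\<close>)
  ultimately show ?thesis using ge by simp
qed

lemma strict_prefix_node:
  "valid_addr t2 (a @ j0 # rest) \<Longrightarrow> \<exists>us. subtree t2 a = Node us \<and> j0 < length us"
  by (cases "subtree t2 a") (auto simp: valid_append)

lemma build_pop:
  fixes Ls :: "('p, 'r::linorder) ptree list"
  assumes g: "good f n t2" and len: "length Ls = n" and pp: "pifo_pop p = Some (i0, p')"
    and i0: "i0 < n"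
  shows "valid_addr t2 a \<Longrightarrow> u = subtree t2 a \<Longrightarrow> prefix a (f [i0]) \<Longrightarrow>
   pop (build Ls f n p u a) = (case pop (Ls ! i0) of None \<Rightarrow> None
      | Some (x, L') \<Rightarrow> Some (x, build (Ls[i0 := L']) f n p' u a))"
proof (induction u arbitrary: a)
  have bat: "\<And>L q u. build L f n q u (f [i0]) = L ! i0" by (rule build_eq1[OF g i0]) simp
  case Star
  show ?case
  proof (cases "a = f [i0]")
    case True
    show ?thesis unfolding True bat using len i0 by (simp split: option.split)
  next
    case False
    then obtain j0 rest where "f [i0] = a @ j0 # rest" using Star.prems(3)
      by (metis append.right_neutral neq_Nil_conv prefixE)
    then show ?thesis using strict_prefix_node[of t2 a j0 rest] g i0 Star.prems unfolding good_def
      by auto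
  qed
next
  case (Node us)
  have bat: "\<And>L q u. build L f n q u (f [i0]) = L ! i0" by (rule build_eq1[OF g i0]) simp
  show ?case
  proof (cases "\<exists>i<n. f [i] = a")
    case True
    then obtain i where i: "i < n" "f [i] = a" by auto
    then have "i = i0" using g Node.prems(3) i0 unfolding good_def by auto
    then have ai: "a = f [i0]" using i by simp
    show ?thesis using len i0 unfolding ai bat by (simp split: option.split)
  next
    case False
    then obtain j0 rest where fi0: "f [i0] = a @ j0 # rest" using Node.prems(3) i0
      by (metis append.right_neutral neq_Nil_conv prefixE)
    have va: "valid_addr t2 (f [i0])" using g i0 unfolding good_def by auto
    then obtain us' where us': "subtree t2 a = Node us'" "j0 < length us'"
      using strict_prefix_node[of t2 a j0 rest] fi0 by auto
    have usu: "us' = us" using us' Node.prems by simp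
    have j0: "j0 < length us" using us' usu by simp
    have pj0: "prefix (a @ [j0]) (f [i0])" using fi0 by simp
    have rel0: "\<exists>i<n. prefix (a @ [j0]) (f [i])" using pj0 i0 by blast
    define F :: "('p, 'r) ptree list \<Rightarrow> (nat, 'r) pifo \<Rightarrow> nat \<times> topo \<Rightarrow> ('p, 'r) ptree" where "F = (\<lambda>Ls p. \<lambda>(j, uj). if \<exists>i<n. prefix (a @ [j]) (f [i])
                                  then build Ls f n p uj (a @ [j])
                                  else empty_tree (uj :: topo))"
    have b1: "build Ls f n p (Node us) a = Internal (map (F Ls p) (zip [0..<length us] us)) (reindex f a p)"
      for Ls p unfolding F_def by (rule build_eq2[OF False])
    have rp: "pifo_pop (reindex f a p) = Some (j0, reindex f a p')"
      by (rule reindex_pop[where f=f, OF pp pj0])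
    have C0: "map (F Ls p) (zip [0..<length us] us) ! j0 = build Ls f n p (us ! j0) (a @ [j0])"
      using j0 rel0 unfolding F_def by simp
    have vj0: "valid_addr t2 (a @ [j0])" using va fi0 valid_append[of t2 "a @ [j0]" rest] by simp
    have sj0: "us ! j0 = subtree t2 (a @ [j0])"
      using subtree_append[of t2 a "[j0]"] us' usu by simp
    have IH: "pop (build Ls f n p (us ! j0) (a @ [j0])) = (case pop (Ls ! i0) of None \<Rightarrow> None
      | Some (x, L') \<Rightarrow> Some (x, build (Ls[i0 := L']) f n p' (us ! j0) (a @ [j0])))"
      using Node.IH[OF nth_mem[OF j0] vj0 sj0 pj0] .
    have other: "F Ls p (j, us ! j) = F (Ls[i0 := L']) p' (j, us ! j)" if "j \<noteq> j0" for j L'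
    proof -
      have np: "\<not> prefix (a @ [j]) (f [i0])" using that pj0 prefix_snoc_unique[of a j "f [i0]" j0] by auto
      obtain xs e ys where e: "p = xs @ e # ys" "i0 = fst e" "p' = xs @ ys"
        using pifo_pop_Some[OF pp] by blast
      have "build Ls f n p (us ! j) (a @ [j]) = build (Ls[i0 := L']) f n p' (us ! j) (a @ [j])"
      proof (rule build_cong[OF g])
        show "\<forall>i<n. prefix (a @ [j]) (f [i]) \<longrightarrow> Ls ! i = Ls[i0 := L'] ! i"
        proof (intro allI impI)
          fix i assume "i < n" "prefix (a @ [j]) (f [i])"
          then have "i \<noteq> i0" using np by auto
          then show "Ls ! i = Ls[i0 := L'] ! i" by simp
        qed
        show "filter (\<lambda>(i, r). prefix (a @ [j]) (f [i])) p = filter (\<lambda>(i, r). prefix (a @ [j]) (f [i])) p'"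
          using np e by (cases e) auto
      qed
      then show ?thesis unfolding F_def by auto
    qed
    show ?thesis
    proof (cases "pop (Ls ! i0)")
      case None
      then show ?thesis using b1 rp C0 IH j0 by simp
    next
      case (Some xL)
      obtain x L' where xL: "xL = (x, L')" by (cases xL)
      have eqC: "(map (F Ls p) (zip [0..<length us] us))[j0 := build (Ls[i0 := L']) f n p' (us ! j0) (a @ [j0])]
          = map (F (Ls[i0 := L']) p') (zip [0..<length us] us)"
      proof (rule nth_equalityI)
        fix j assume "j < length ((map (F Ls p) (zip [0..<length us] us))[j0 := build (Ls[i0 := L']) f n p' (us ! j0) (a @ [j0])])"
        then have j: "j < length us" by simp
        show "(map (F Ls p) (zip [0..<length us] us))[j0 := build (Ls[i0 := L']) f n p' (us ! j0) (a @ [j0])] ! j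
          = map (F (Ls[i0 := L']) p') (zip [0..<length us] us) ! j"
          using j other[of j L'] rel0 unfolding F_def by (cases "j = j0") auto
      qed simp
      show ?thesis using b1 rp C0 IH j0 Some xL eqC by simp
    qed
  qed
qed

fun mkpath :: "nat list \<Rightarrow> 'r \<Rightarrow> 'r path \<Rightarrow> 'r path" where
  "mkpath [] r pt = pt"
| "mkpath (j # js) r pt = PStep j r (mkpath js r pt)"

lemma is_path_mkpath:
  "valid_addr t js \<Longrightarrow> is_path (subtree t js) pt \<Longrightarrow> is_path t (mkpath js r pt)"
proof (induction js arbitrary: t)
  case Nil then show ?case by simp
next
  case (Cons j js) then show ?case by (cases t) auto
qed

lemma reindex_snoc:
  "prefix (a @ [j0]) (f [i0]) \<Longrightarrow> reindex f a (p @ [(i0, r)]) = reindex f a p @ [(j0, r)]"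
  unfolding reindex_alt using the_j by auto

lemma build_push:
  fixes Ls :: "('p, 'r::linorder) ptree list"
  assumes g: "good f n t2" and len: "length Ls = n" and i0: "i0 < n"
  shows "valid_addr t2 a \<Longrightarrow> u = subtree t2 a \<Longrightarrow> f [i0] = a @ js \<Longrightarrow>
    push (build Ls f n p u a) x (mkpath js r pt) =
    build (Ls[i0 := push (Ls ! i0) x pt]) f n (p @ [(i0, r)]) u a"
proof (induction u arbitrary: a js)
  have bat: "\<And>L q u. build L f n q u (f [i0]) = L ! i0" by (rule build_eq1[OF g i0]) simp
  case Star
  show ?case
  proof (cases js)
    case Nil
    then have ai: "a = f [i0]" using Star.prems by simp
    show ?thesis unfolding ai bat using len i0 Nil by simp
  next
    case (Cons j0 rest)
    then show ?thesis using strict_prefix_node[of t2 a j0 rest] g i0 Star.prems unfolding good_def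
      by auto
  qed
next
  case (Node us)
  have bat: "\<And>L q u. build L f n q u (f [i0]) = L ! i0" by (rule build_eq1[OF g i0]) simp
  show ?case
  proof (cases js)
    case Nil
    then have ai: "a = f [i0]" using Node.prems by simp
    show ?thesis unfolding ai bat using len i0 Nil by simp
  next
    case (Cons j0 rest)
    have False': "\<not> (\<exists>i<n. f [i] = a)"
    proof
      assume "\<exists>i<n. f [i] = a"
      then obtain i where i: "i < n" "f [i] = a" by auto
      then have "prefix (f [i]) (f [i0])" using Node.prems(3) by simp
      then have "i = i0" using g i i0 unfolding good_def by auto
      then show False using i Node.prems(3) Cons by simp
    qed
    have fi0: "f [i0] = a @ j0 # rest" using Node.prems(3) Cons by simp
    have va: "valid_addr t2 (f [i0])" using g i0 unfolding good_def by auto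
    then obtain us' where us': "subtree t2 a = Node us'" "j0 < length us'"
      using strict_prefix_node[of t2 a j0 rest] fi0 by auto
    have usu: "us' = us" using us' Node.prems by simp
    have j0: "j0 < length us" using us' usu by simp
    have pj0: "prefix (a @ [j0]) (f [i0])" using fi0 by simp
    have rel0: "\<exists>i<n. prefix (a @ [j0]) (f [i])" using pj0 i0 by blast
    define F :: "('p, 'r) ptree list \<Rightarrow> (nat, 'r) pifo \<Rightarrow> nat \<times> topo \<Rightarrow> ('p, 'r) ptree" where
      "F = (\<lambda>Ls p. \<lambda>(j, uj). if \<exists>i<n. prefix (a @ [j]) (f [i])
                                  then build Ls f n p uj (a @ [j])
                                  else empty_tree (uj :: topo))"
    have b1: "build Ls f n p (Node us) a = Internal (map (F Ls p) (zip [0..<length us] us)) (reindex f a p)"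
      for Ls p unfolding F_def by (rule build_eq2[OF False'])
    have C0: "map (F Ls p) (zip [0..<length us] us) ! j0 = build Ls f n p (us ! j0) (a @ [j0])"
      using j0 rel0 unfolding F_def by simp
    have vj0: "valid_addr t2 (a @ [j0])" using va fi0 valid_append[of t2 "a @ [j0]" rest] by simp
    have sj0: "us ! j0 = subtree t2 (a @ [j0])"
      using subtree_append[of t2 a "[j0]"] us' usu by simp
    have IH: "push (build Ls f n p (us ! j0) (a @ [j0])) x (mkpath rest r pt) =
       build (Ls[i0 := push (Ls ! i0) x pt]) f n (p @ [(i0, r)]) (us ! j0) (a @ [j0])"
      using Node.IH[OF nth_mem[OF j0] vj0 sj0] fi0 by simp
    let ?L' = "Ls[i0 := push (Ls ! i0) x pt]"
    have other: "F Ls p (j, us ! j) = F ?L' (p @ [(i0, r)]) (j, us ! j)" if "j \<noteq> j0" for j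
    proof -
      have np: "\<not> prefix (a @ [j]) (f [i0])" using that pj0 prefix_snoc_unique[of a j "f [i0]" j0] by auto
      have "build Ls f n p (us ! j) (a @ [j]) = build ?L' f n (p @ [(i0, r)]) (us ! j) (a @ [j])"
      proof (rule build_cong[OF g])
        show "\<forall>i<n. prefix (a @ [j]) (f [i]) \<longrightarrow> Ls ! i = ?L' ! i"
        proof (intro allI impI)
          fix i assume "i < n" "prefix (a @ [j]) (f [i])"
          then have "i \<noteq> i0" using np by auto
          then show "Ls ! i = ?L' ! i" by simp
        qed
        show "filter (\<lambda>(i, r). prefix (a @ [j]) (f [i])) p = filter (\<lambda>(i, r). prefix (a @ [j]) (f [i])) (p @ [(i0, r)])"
          using np by simp
      qed
      then show ?thesis unfolding F_def by auto
    qed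
    have eqC: "(map (F Ls p) (zip [0..<length us] us))[j0 := build ?L' f n (p @ [(i0, r)]) (us ! j0) (a @ [j0])]
          = map (F ?L' (p @ [(i0, r)])) (zip [0..<length us] us)"
    proof (rule nth_equalityI)
      fix j assume "j < length ((map (F Ls p) (zip [0..<length us] us))[j0 := build ?L' f n (p @ [(i0, r)]) (us ! j0) (a @ [j0])])"
      then have j: "j < length us" by simp
      show "(map (F Ls p) (zip [0..<length us] us))[j0 := build ?L' f n (p @ [(i0, r)]) (us ! j0) (a @ [j0])] ! j
          = map (F ?L' (p @ [(i0, r)])) (zip [0..<length us] us) ! j"
        using j other[of j] rel0 unfolding F_def by (cases "j = j0") auto
    qed simp
    show ?thesis using b1 C0 IH j0 eqC Cons reindex_snoc[where f=f, OF pj0, of p r]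
      by (simp add: pifo_push_def)
  qed
qed

lemma build_none: "\<not> (\<exists>i<n. f [i] = a) \<Longrightarrow> pop (build Ls f n [] u a) = None"
  by (cases u) (auto simp: build_eq2 build_eq3 reindex_def pifo_pop_def)

lemma wf_empty: "wf_tree u (empty_tree u)"
  by (induction u) auto

lemma build_wf:
  fixes Ls :: "('p, 'r::linorder) ptree list"
  assumes g: "good f n t2" and len: "length Ls = n"
    and wL: "\<forall>i<n. wf_tree (subtree t2 (f [i])) (Ls ! i)" and wp: "\<forall>(i, r)\<in>set p. i < n"
  shows "valid_addr t2 a \<Longrightarrow> u = subtree t2 a \<Longrightarrow> wf_tree u (build Ls f n p u a)"
proof (induction u arbitrary: a)
  case Star
  show ?case
  proof (cases "\<exists>i<n. f [i] = a")
    case True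
    then obtain i where i: "i < n" "f [i] = a" by auto
    have "build Ls f n p Star a = Ls ! i" using build_eq1[OF g i] .
    moreover have "wf_tree (subtree t2 (f [i])) (Ls ! i)" using wL i(1) by blast
    ultimately show ?thesis using i Star.prems(2) by simp
  qed (simp add: build_eq3)
next
  case (Node us)
  show ?case
  proof (cases "\<exists>i<n. f [i] = a")
    case True
    then obtain i where i: "i < n" "f [i] = a" by auto
    have "build Ls f n p (Node us) a = Ls ! i" using build_eq1[OF g i] .
    moreover have "wf_tree (subtree t2 (f [i])) (Ls ! i)" using wL i(1) by blast
    ultimately show ?thesis using i Node.prems(2) by simp
  next
    case False
    have ch: "wf_tree (us ! j) (if \<exists>i<n. prefix (a @ [j]) (f [i])
                                  then build Ls f n p (us ! j) (a @ [j])
                                  else empty_tree (us ! j))" if j: "j < length us" for j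
    proof (cases "\<exists>i<n. prefix (a @ [j]) (f [i])")
      case True
      have vj: "valid_addr t2 (a @ [j])"
        using Node.prems j valid_append[of t2 a "[j]"] by (cases "subtree t2 a") auto
      have sj: "us ! j = subtree t2 (a @ [j])"
        using subtree_append[of t2 a "[j]"] Node.prems(2)[symmetric] by simp
      show ?thesis using True Node.IH[OF nth_mem[OF j] vj sj] by simp
    next
      case False
      then show ?thesis by (auto simp: wf_empty)
    qed
    have ent: "j < length us" if jr: "(j, r) \<in> set (reindex f a p)" for j r
    proof -
      obtain y where y: "y \<in> set p" "(\<lambda>(i, r). \<exists>j. prefix (a @ [j]) (f [i])) y"
        "(j, r) = (\<lambda>(i, r). (THE j. prefix (a @ [j]) (f [i]), r)) y"
      proof -
        have "(j, r) \<in> (\<lambda>(i, r). (THE j. prefix (a @ [j]) (f [i]), r)) ` set (filter (\<lambda>(i, r). \<exists>j. prefix (a @ [j]) (f [i])) p)"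
          using jr unfolding reindex_alt by (simp only: set_map)
        then obtain y where A: "y \<in> set (filter (\<lambda>(i, r). \<exists>j. prefix (a @ [j]) (f [i])) p)"
          and B: "(j, r) = (\<lambda>(i, r). (THE j. prefix (a @ [j]) (f [i]), r)) y" by (rule imageE)
        show ?thesis by (rule that[of y]) (use A B in auto)
      qed
      obtain i r' where yi: "y = (i, r')" by (cases y)
      obtain j' where j': "prefix (a @ [j']) (f [i])" using y(2) yi by auto
      have ij: "(i, r') \<in> set p" "prefix (a @ [j']) (f [i])" "j = j'"
        using y yi j' the_j[OF j'] by auto
      have "i < n" using wp ij by auto
      then have "valid_addr t2 (f [i])" using g unfolding good_def by auto
      moreover obtain rest where "f [i] = a @ j' # rest" using ij(2) by (auto simp: prefix_def)
      ultimately have "valid_addr (subtree t2 a) (j' # rest)" using valid_append[of t2 a "j' # rest"] by simp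
      then have "valid_addr (Node us) (j' # rest)" using Node.prems(2) by simp
      then show ?thesis using ij by simp
    qed
    show ?thesis using False ch ent by (auto simp: build_eq2)
  qed
qed

lemma emb_Star: assumes "embedding Star t2 f" shows "t2 = Star"
proof -
  have m: "[] \<in> addr Star" by (simp add: addr_def)
  have "subtree t2 (f []) = Star" using assms m subtree_Star[of "[]"] unfolding embedding_def by blast
  moreover have "f [] = []" using assms unfolding embedding_def by simp
  ultimately show ?thesis by simp
qed

lemma emb_valid: "embedding t1 t2 f \<Longrightarrow> a \<in> addr t1 \<Longrightarrow> valid_addr t2 (f a)"
  unfolding embedding_def addr_def by (auto simp: image_subset_iff)

lemma addr_single: "i < length ts \<Longrightarrow> [i] \<in> addr (Node ts)"
  by (simp add: addr_def)

lemma emb_good: assumes "embedding (Node ts) t2 f" shows "good f (length ts) t2"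
  unfolding good_def
proof (intro conjI allI impI)
  fix i assume i: "i < length ts"
  have m: "[i] \<in> addr (Node ts)" "[] \<in> addr (Node ts)" using i by (auto simp: addr_def)
  then show "valid_addr t2 (f [i])" using emb_valid[OF assms] by auto
  show "f [i] \<noteq> []"
  proof
    assume "f [i] = []"
    then have "f [i] = f []" using assms unfolding embedding_def by simp
    then have "[i] = []" using assms m unfolding embedding_def inj_on_def by blast
    then show False by simp
  qed
next
  fix i i' assume i: "i < length ts" "i' < length ts" "prefix (f [i]) (f [i'])"
  then have "prefix [i] [i']" using assms addr_single unfolding embedding_def by blast
  then show "i = i'" by simp
qed

lemma emb_sub:
  assumes e: "embedding (Node ts) t2 f" and i: "i < length ts"
  shows "embedding (ts ! i) (subtree t2 (f [i])) (sub_emb f i)"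
proof -
  have mem: "i # a \<in> addr (Node ts) \<longleftrightarrow> a \<in> addr (ts ! i)" for a
    using i by (simp add: addr_def)
  have hf: "f (i # a) = f [i] @ sub_emb f i a" if "a \<in> addr (ts ! i)" for a
  proof -
    have "prefix [i] (i # a)" by simp
    then have "prefix (f [i]) (f (i # a))"
      using e mem[of a] that addr_single[OF i] unfolding embedding_def by blast
    then obtain zs where "f (i # a) = f [i] @ zs" by (auto simp: prefix_def)
    then show ?thesis unfolding sub_emb_def by simp
  qed
  have va: "valid_addr t2 (f (i # a))" if "a \<in> addr (ts ! i)" for a
    using emb_valid[OF e] mem[of a] that by auto
  show ?thesis unfolding embedding_def
  proof (intro conjI ballI)
    show "sub_emb f i ` addr (ts ! i) \<subseteq> addr (subtree t2 (f [i]))"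
    proof
      fix b assume "b \<in> sub_emb f i ` addr (ts ! i)"
      then obtain a where a: "a \<in> addr (ts ! i)" "b = sub_emb f i a" by auto
      then show "b \<in> addr (subtree t2 (f [i]))"
        using va[OF a(1)] hf[OF a(1)] valid_append[of t2 "f [i]" b] by (simp add: addr_def)
    qed
    show "inj_on (sub_emb f i) (addr (ts ! i))"
    proof (rule inj_onI)
      fix a a' assume a: "a \<in> addr (ts ! i)" "a' \<in> addr (ts ! i)" "sub_emb f i a = sub_emb f i a'"
      then have "f (i # a) = f (i # a')" using hf by simp
      then have "i # a = i # a'" using e mem a unfolding embedding_def inj_on_def by blast
      then show "a = a'" by simp
    qed
    show "sub_emb f i [] = []" unfolding sub_emb_def using e unfolding embedding_def by simp
  next
    fix a assume a: "a \<in> addr (ts ! i)"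
    show "subtree (ts ! i) a = Star \<longrightarrow> subtree (subtree t2 (f [i])) (sub_emb f i a) = Star"
    proof
      assume "subtree (ts ! i) a = Star"
      then have "subtree (Node ts) (i # a) = Star" by simp
      then have "subtree t2 (f (i # a)) = Star" using e mem[of a] a unfolding embedding_def by blast
      then show "subtree (subtree t2 (f [i])) (sub_emb f i a) = Star"
        using hf[OF a] subtree_append by simp
    qed
  next
    fix a a' assume a: "a \<in> addr (ts ! i)" "a' \<in> addr (ts ! i)"
    have "prefix a a' \<longleftrightarrow> prefix (i # a) (i # a')" by simp
    also have "\<dots> \<longleftrightarrow> prefix (f (i # a)) (f (i # a'))"
      using e mem a unfolding embedding_def by blast
    also have "\<dots> \<longleftrightarrow> prefix (sub_emb f i a) (sub_emb f i a')"
      using hf a by simp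
    finally show "prefix a a' \<longleftrightarrow> prefix (sub_emb f i a) (sub_emb f i a')" .
  qed
qed

definition LL :: "topo list \<Rightarrow> topo \<Rightarrow> (nat list \<Rightarrow> nat list) \<Rightarrow> ('p, 'r) ptree list \<Rightarrow> ('p, 'r) ptree list" where
  "LL ts t2 f qs = map (\<lambda>(i, ti, qi). lift ti (subtree t2 (f [i])) (sub_emb f i) qi)
                (zip [0..<length ts] (zip ts qs))"

lemma lift_Node': "lift (Node ts) t2 f (Internal qs p) = build (LL ts t2 f qs) f (length ts) p t2 []"
  unfolding LL_def by simp

lemma LL_len: "length qs = length ts \<Longrightarrow> length (LL ts t2 f qs) = length ts"
  unfolding LL_def by simp

lemma LL_nth: "length qs = length ts \<Longrightarrow> i < length ts \<Longrightarrow>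
   LL ts t2 f qs ! i = lift (ts ! i) (subtree t2 (f [i])) (sub_emb f i) (qs ! i)"
  unfolding LL_def by simp

lemma LL_upd: "length qs = length ts \<Longrightarrow> i < length ts \<Longrightarrow>
   LL ts t2 f (qs[i := q']) = (LL ts t2 f qs)[i := lift (ts ! i) (subtree t2 (f [i])) (sub_emb f i) q']"
  by (rule nth_equalityI) (auto simp: LL_len LL_nth nth_list_update)

lemma pifo_pop_None: "pifo_pop p = None \<longleftrightarrow> p = []"
  by (simp add: pifo_pop_def Let_def)

lemma pifo_pop_set: "pifo_pop p = Some (i, p') \<Longrightarrow> (\<exists>r. (i, r) \<in> set p) \<and> set p' \<subseteq> set p"
proof -
  assume "pifo_pop p = Some (i, p')"
  from pifo_pop_Some[OF this] obtain xs e ys where "p = xs @ e # ys" "i = fst e" "p' = xs @ ys"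
    by blast
  then show ?thesis by (cases e) auto
qed

lemma wf_pop: "wf_tree t q \<Longrightarrow> pop q = Some (x, q') \<Longrightarrow> wf_tree t q'"
proof (induction t arbitrary: q x q')
  case Star
  then show ?case by (cases q) (auto split: option.splits)
next
  case (Node ts)
  then obtain qs p where q: "q = Internal qs p" by (cases q) auto
  obtain i p' where pp: "pifo_pop p = Some (i, p')" using Node.prems q
    by (auto split: option.splits)
  have i: "i < length qs" using Node.prems q pp by (auto split: if_splits)
  obtain qi' where pi: "pop (qs ! i) = Some (x, qi')" and q': "q' = Internal (qs[i := qi']) p'"
    using Node.prems q pp i by (auto split: option.splits)
  have wq: "length qs = length ts" "\<forall>k<length ts. wf_tree (ts ! k) (qs ! k)" "\<forall>(k, r)\<in>set p. k < length ts"
    using Node.prems q by auto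
  have "wf_tree (ts ! i) qi'" using Node.IH[OF nth_mem] wq pi i by auto
  then show ?case using q' wq pifo_pop_set[OF pp] i by (auto simp: nth_list_update)
qed

lemma wf_push: "wf_tree t q \<Longrightarrow> is_path t pt \<Longrightarrow> wf_tree t (push q x pt)"
proof (induction t arbitrary: q pt)
  case Star
  then show ?case by (cases q; cases pt) (auto simp: pifo_push_def)
next
  case (Node ts)
  then obtain qs p where q: "q = Internal qs p" by (cases q) auto
  obtain i r pt' where pt: "pt = PStep i r pt'" using Node.prems by (cases pt) auto
  have i: "i < length ts" "is_path (ts ! i) pt'" using Node.prems pt by auto
  have wq: "length qs = length ts" "\<forall>k<length ts. wf_tree (ts ! k) (qs ! k)" "\<forall>(k, r)\<in>set p. k < length ts"
    using Node.prems q by auto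
  have "wf_tree (ts ! i) (push (qs ! i) x pt')" using Node.IH[OF nth_mem] wq i by auto
  then show ?case using q pt wq i by (auto simp: nth_list_update pifo_push_def)
qed

lemma lift_wf:
  fixes q :: "('p, 'r::linorder) ptree"
  shows "embedding t1 t2 f \<Longrightarrow> wf_tree t1 q \<Longrightarrow> wf_tree t2 (lift t1 t2 f q)"
proof (induction t1 arbitrary: t2 f q)
  case Star
  then have "t2 = Star" using emb_Star by blast
  then show ?case using Star.prems by (cases q) auto
next
  case (Node ts)
  then obtain qs p where q: "q = Internal qs p" by (cases q) auto
  have wq: "length qs = length ts" "\<forall>k<length ts. wf_tree (ts ! k) (qs ! k)" "\<forall>(k, r)\<in>set p. k < length ts"
    using Node.prems q by auto
  have g: "good f (length ts) t2" using emb_good Node.prems by blast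
  have wL: "\<forall>i<length ts. wf_tree (subtree t2 (f [i])) (LL ts t2 f qs ! i)"
    using Node.IH[OF nth_mem emb_sub[OF Node.prems(1)]] wq by (auto simp: LL_nth)
  show ?case unfolding q lift_Node'
    by (rule build_wf[OF g LL_len[OF wq(1), of t2 f] wL wq(3)]) auto
qed

lemma lift_pop: "embedding t1 t2 f \<Longrightarrow> wf_tree t1 q \<Longrightarrow>
  pop (lift t1 t2 f q) = map_option (\<lambda>(x, q'). (x, lift t1 t2 f q')) (pop q)"
proof (induction t1 arbitrary: t2 f q)
  case Star
  then show ?case using emb_Star by (cases q) (auto split: option.splits)
next
  case (Node ts)
  then obtain qs p where q: "q = Internal qs p" by (cases q) auto
  have wq: "length qs = length ts" "\<forall>k<length ts. wf_tree (ts ! k) (qs ! k)" "\<forall>(k, r)\<in>set p. k < length ts"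
    using Node.prems q by auto
  have g: "good f (length ts) t2" using emb_good Node.prems by blast
  show ?case
  proof (cases "pifo_pop p")
    case None
    then have "p = []" using pifo_pop_None by blast
    moreover have "\<not> (\<exists>i<length ts. f [i] = [])" using g unfolding good_def by auto
    ultimately show ?thesis using None unfolding q lift_Node' by (simp add: build_none)
  next
    case (Some ip)
    obtain i0 p' where ip: "ip = (i0, p')" by (cases ip)
    have pp: "pifo_pop p = Some (i0, p')" using Some ip by simp
    have i0: "i0 < length ts" using pifo_pop_set[OF pp] wq(3) by auto
    have bp: "pop (build (LL ts t2 f qs) f (length ts) p t2 []) =
      (case pop (LL ts t2 f qs ! i0) of None \<Rightarrow> None
      | Some (x, L') \<Rightarrow> Some (x, build ((LL ts t2 f qs)[i0 := L']) f (length ts) p' t2 []))"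
      by (rule build_pop[OF g LL_len[OF wq(1), of t2 f] pp i0]) auto
    have IH: "pop (LL ts t2 f qs ! i0) = map_option (\<lambda>(x, q'). (x, lift (ts ! i0) (subtree t2 (f [i0])) (sub_emb f i0) q')) (pop (qs ! i0))"
      using Node.IH[OF nth_mem[OF i0] emb_sub[OF Node.prems(1) i0]] wq i0 by (simp add: LL_nth)
    show ?thesis
    proof (cases "pop (qs ! i0)")
      case None
      then show ?thesis unfolding q lift_Node' bp IH using pp i0 wq by simp
    next
      case (Some xq)
      obtain x q' where xq: "xq = (x, q')" by (cases xq)
      have L: "lift (Node ts) t2 f (Internal (qs[i0 := q']) p') =
          build ((LL ts t2 f qs)[i0 := lift (ts ! i0) (subtree t2 (f [i0])) (sub_emb f i0) q']) f (length ts) p' t2 []"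
        unfolding lift_Node' LL_upd[OF wq(1) i0] ..
      show ?thesis unfolding q lift_Node' bp IH using pp i0 wq Some xq
        by (simp add: L del: lift.simps)
    qed
  qed
qed

lemma lift_push:
  fixes q :: "('p, 'r::linorder) ptree"
  shows "embedding t1 t2 f \<Longrightarrow> wf_tree t1 q \<Longrightarrow> is_path t1 pt \<Longrightarrow>
  \<exists>pt2. is_path t2 pt2 \<and> push (lift t1 t2 f q) x pt2 = lift t1 t2 f (push q x pt)"
proof (induction t1 arbitrary: t2 f q pt)
  case Star
  then show ?case using emb_Star by auto
next
  case (Node ts)
  then obtain qs p where q: "q = Internal qs p" by (cases q) auto
  obtain i r pt' where pt: "pt = PStep i r pt'" using Node.prems by (cases pt) auto
  have i: "i < length ts" "is_path (ts ! i) pt'" using Node.prems pt by auto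
  have wq: "length qs = length ts" "\<forall>k<length ts. wf_tree (ts ! k) (qs ! k)" "\<forall>(k, r)\<in>set p. k < length ts"
    using Node.prems q by auto
  have g: "good f (length ts) t2" using emb_good Node.prems by blast
  obtain pt2' where pt2': "is_path (subtree t2 (f [i])) pt2'"
    "push (LL ts t2 f qs ! i) x pt2' = lift (ts ! i) (subtree t2 (f [i])) (sub_emb f i) (push (qs ! i) x pt')"
    using Node.IH[OF nth_mem[OF i(1)] emb_sub[OF Node.prems(1) i(1)], of "qs ! i" pt'] wq i
    by (auto simp: LL_nth)
  have va: "valid_addr t2 (f [i])" using g i unfolding good_def by auto
  have bp: "push (build (LL ts t2 f qs) f (length ts) p t2 []) x (mkpath (f [i]) r pt2') =
     build ((LL ts t2 f qs)[i := push (LL ts t2 f qs ! i) x pt2']) f (length ts) (p @ [(i, r)]) t2 []"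
    by (rule build_push[OF g LL_len[OF wq(1), of t2 f] i(1)]) auto
  show ?case
  proof (intro exI conjI)
    show "is_path t2 (mkpath (f [i]) r pt2')" using is_path_mkpath[OF va pt2'(1)] .
    show "push (lift (Node ts) t2 f q) x (mkpath (f [i]) r pt2') = lift (Node ts) t2 f (push q x pt)"
    proof -
      have L: "lift (Node ts) t2 f (Internal (qs[i := push (qs ! i) x pt']) (p @ [(i, r)])) =
          build ((LL ts t2 f qs)[i := lift (ts ! i) (subtree t2 (f [i])) (sub_emb f i) (push (qs ! i) x pt')])
             f (length ts) (p @ [(i, r)]) t2 []"
        unfolding lift_Node' LL_upd[OF wq(1) i(1)] ..
      show ?thesis unfolding q lift_Node' bp pt2'(2) using pt wq i
        by (simp add: L pifo_push_def del: lift.simps)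
    qed
  qed
qed

theorem theorem5p11:
  fixes t1 t2 :: topo and f :: "nat list \<Rightarrow> nat list"
    and q :: "('p, 'r::linorder) ptree"
  assumes "embedding t1 t2 f"
    and "wf_tree t1 q"
  shows "simulated_by t1 t2 q (lift t1 t2 f q)"
proof -
  define R :: "(('p, 'r) ptree \<times> ('p, 'r) ptree) set" where
    "R = {(q, lift t1 t2 f q) | q. wf_tree t1 q}"
  have "simulation t1 t2 R"
    unfolding simulation_def
  proof (intro conjI ballI)
    fix z assume "z \<in> R"
    then show "case z of (q1, q2) \<Rightarrow> wf_tree t1 q1 \<and> wf_tree t2 q2"
      unfolding R_def using lift_wf[OF assms(1)] by auto
  next
    fix z assume z: "z \<in> R"
    then obtain q1 where zq: "z = (q1, lift t1 t2 f q1)" "wf_tree t1 q1" unfolding R_def by auto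
    have P: "pop (lift t1 t2 f q1) = map_option (\<lambda>(x, q'). (x, lift t1 t2 f q')) (pop q1)"
      using lift_pop[OF assms(1) zq(2)] .
    have A: "pop q1 = None \<longrightarrow> pop (lift t1 t2 f q1) = None" using P by simp
    have B: "\<forall>x q1'. pop q1 = Some (x, q1') \<longrightarrow>
            (\<exists>q2'. pop (lift t1 t2 f q1) = Some (x, q2') \<and> (q1', q2') \<in> R)"
    proof (intro allI impI)
      fix x q1' assume pq: "pop q1 = Some (x, q1')"
      have "wf_tree t1 q1'" using wf_pop[OF zq(2) pq] .
      with pq show "\<exists>q2'. pop (lift t1 t2 f q1) = Some (x, q2') \<and> (q1', q2') \<in> R"
        using P unfolding R_def by auto
    qed
    have C: "\<forall>x pt1. is_path t1 pt1 \<longrightarrow>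
            (\<exists>pt2. is_path t2 pt2 \<and> (push q1 x pt1, push (lift t1 t2 f q1) x pt2) \<in> R)"
    proof (intro allI impI)
      fix x and pt1 :: "'r path" assume pt1: "is_path t1 pt1"
      obtain pt2 where "is_path t2 pt2" "push (lift t1 t2 f q1) x pt2 = lift t1 t2 f (push q1 x pt1)"
        using lift_push[OF assms(1) zq(2) pt1] by blast
      moreover have "wf_tree t1 (push q1 x pt1)" using wf_push[OF zq(2) pt1] .
      ultimately show "\<exists>pt2. is_path t2 pt2 \<and> (push q1 x pt1, push (lift t1 t2 f q1) x pt2) \<in> R"
        unfolding R_def by auto
    qed
    show "case z of (q1, q2) \<Rightarrow>
        (pop q1 = None \<longrightarrow> pop q2 = None) \<and>
        (\<forall>x q1'. pop q1 = Some (x, q1') \<longrightarrow> (\<exists>q2'. pop q2 = Some (x, q2') \<and> (q1', q2') \<in> R)) \<and>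
        (\<forall>x pt1. is_path t1 pt1 \<longrightarrow> (\<exists>pt2. is_path t2 pt2 \<and> (push q1 x pt1, push q2 x pt2) \<in> R))"
      using A B C zq(1) by simp
  qed
  moreover have "(q, lift t1 t2 f q) \<in> R" unfolding R_def using assms(2) by auto
  ultimately show ?thesis unfolding simulated_by_def by blast
qed

end
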